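(* If the $r\times r$ minors of an $n\times n$ symmetric matrix of indeterminates do not form a tropical basis, then the $r\times r$ minors of an $(n+1)\times(n+1)$ symmetric matrix of indeterminates do not form a tropical basis.
   Context: Let $\tilde K$ be the field of Hahn series $\sum_{\alpha\in A}c_\alpha t^\alpha$ ($A\subset\mathbb R$ well-ordered, $c_\alpha\in\mathbb C$); for nonzero $a\in\tilde K$, $\deg(a)$ is the smallest exponent with nonzero coefficient. A symmetric lift of a real symmetric matrix $A$ is a symmetric matrix $\tilde A$ over $\tilde K$ with all entries nonzero and $\deg(\tilde a_{i,j})=A_{i,j}$. For an $r\times r$ submatrix of $A$ with row index set $I$ and column index set $J$, each bijection $\rho:I\to J$ gives a monomial $\prod_{i\in I}X_{i,\rho(i)}$ in commuting variables subject to $X_{i,j}=X_{j,i}$, with value $\sum_{i\in I}A_{i,\rho(i)}$; the submatrix is symmetrically tropically singular if the minimum value is attained by at least two distinct monomials. The $r\times r$ minors of an $n\times n$ symmetric matrix of indeterminates form a tropical basis if for every real symmetric $n\times n$ matrix $A$: every $r\times r$ submatrix of $A$ is symmetrically tropically singular if and only if $A$ has a symmetric lift of rank at most $r-1$ (equivalently, the tropical prevariety of the tropicalized minors equals the tropicalization of the variety they define). *)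

theory Defs
  imports Complex_Main "HOL-Library.Multiset"
begin

text \<open>A Hahn series sum c_alpha t^alpha is represented by its coefficient function
  real => complex; it is a Hahn series iff its support is well-ordered.\<close>

definition hahn :: "(real \<Rightarrow> complex) \<Rightarrow> bool" where
  "hahn a \<longleftrightarrow> (\<forall>S. S \<subseteq> {x. a x \<noteq> 0} \<longrightarrow> S \<noteq> {} \<longrightarrow> (\<exists>m\<in>S. \<forall>y\<in>S. m \<le> y))"

definition hahn_deg :: "(real \<Rightarrow> complex) \<Rightarrow> real" where
  "hahn_deg a = (LEAST x. a x \<noteq> 0)"

text \<open>Coefficient at exponent g of the product of the Hahn series a i, i in I
  (Cauchy product; the index set is finite because supports are well-ordered).\<close>
definition prod_coeff :: "(nat \<Rightarrow> real \<Rightarrow> complex) \<Rightarrow> nat set \<Rightarrow> real \<Rightarrow> complex" where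
  "prod_coeff a I g =
     (\<Sum>\<alpha> \<in> {\<alpha>. (\<forall>i\<in>I. a i (\<alpha> i) \<noteq> 0) \<and> (\<forall>i. i \<notin> I \<longrightarrow> \<alpha> i = 0)
                \<and> (\<Sum>i\<in>I. \<alpha> i) = g}.
        \<Prod>i\<in>I. a i (\<alpha> i))"

definition bijs :: "nat set \<Rightarrow> nat set \<Rightarrow> (nat \<Rightarrow> nat) set" where
  "bijs I J = {\<rho>. bij_betw \<rho> I J \<and> (\<forall>x. x \<notin> I \<longrightarrow> \<rho> x = x)}"

text \<open>Number of inversions of rho w.r.t. the natural orders of I and J; its parity is the
  sign of rho as a permutation when rows and columns are listed increasingly.\<close>
definition inversions :: "nat set \<Rightarrow> (nat \<Rightarrow> nat) \<Rightarrow> nat" where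
  "inversions I \<rho> = card {(i, i'). i \<in> I \<and> i' \<in> I \<and> i < i' \<and> \<rho> i > \<rho> i'}"

definition minor_coeff ::
  "(nat \<Rightarrow> nat \<Rightarrow> real \<Rightarrow> complex) \<Rightarrow> nat set \<Rightarrow> nat set \<Rightarrow> real \<Rightarrow> complex" where
  "minor_coeff M I J g =
     (\<Sum>\<rho>\<in>bijs I J. (-1) ^ inversions I \<rho> * prod_coeff (\<lambda>i. M i (\<rho> i)) I g)"

definition minor_vanishes :: "(nat \<Rightarrow> nat \<Rightarrow> real \<Rightarrow> complex) \<Rightarrow> nat set \<Rightarrow> nat set \<Rightarrow> bool" where
  "minor_vanishes M I J \<longleftrightarrow> (\<forall>g. minor_coeff M I J g = 0)"

text \<open>An n x n matrix (indices 0..n-1) has rank at most r-1, i.e. lies in the variety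
  defined by the r x r minors.\<close>
definition rank_le_minors :: "nat \<Rightarrow> nat \<Rightarrow> (nat \<Rightarrow> nat \<Rightarrow> real \<Rightarrow> complex) \<Rightarrow> bool" where
  "rank_le_minors n r M \<longleftrightarrow>
     (\<forall>I J. I \<subseteq> {..<n} \<longrightarrow> J \<subseteq> {..<n} \<longrightarrow> card I = r \<longrightarrow> card J = r \<longrightarrow> minor_vanishes M I J)"

definition sym_real :: "nat \<Rightarrow> (nat \<Rightarrow> nat \<Rightarrow> real) \<Rightarrow> bool" where
  "sym_real n A \<longleftrightarrow> (\<forall>i<n. \<forall>j<n. A i j = A j i)"

definition sym_lift :: "nat \<Rightarrow> (nat \<Rightarrow> nat \<Rightarrow> real) \<Rightarrow> (nat \<Rightarrow> nat \<Rightarrow> real \<Rightarrow> complex) \<Rightarrow> bool" where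
  "sym_lift n A M \<longleftrightarrow>
     (\<forall>i<n. \<forall>j<n. M i j = M j i \<and> hahn (M i j) \<and> M i j \<noteq> (\<lambda>_. 0)
                   \<and> hahn_deg (M i j) = A i j)"

text \<open>Monomial prod_{i in I} X_{i,rho i} with X_{i,j} = X_{j,i}: the multiset of unordered
  index pairs.\<close>
definition sym_monomial :: "nat set \<Rightarrow> (nat \<Rightarrow> nat) \<Rightarrow> nat set multiset" where
  "sym_monomial I \<rho> = image_mset (\<lambda>i. {i, \<rho> i}) (mset_set I)"

definition trop_value :: "(nat \<Rightarrow> nat \<Rightarrow> real) \<Rightarrow> nat set \<Rightarrow> (nat \<Rightarrow> nat) \<Rightarrow> real" where
  "trop_value A I \<rho> = (\<Sum>i\<in>I. A i (\<rho> i))"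

definition sym_trop_singular :: "(nat \<Rightarrow> nat \<Rightarrow> real) \<Rightarrow> nat set \<Rightarrow> nat set \<Rightarrow> bool" where
  "sym_trop_singular A I J \<longleftrightarrow>
     (\<exists>\<rho>1\<in>bijs I J. \<exists>\<rho>2\<in>bijs I J.
        (\<forall>\<sigma>\<in>bijs I J. trop_value A I \<rho>1 \<le> trop_value A I \<sigma>) \<and>
        trop_value A I \<rho>2 = trop_value A I \<rho>1 \<and>
        sym_monomial I \<rho>1 \<noteq> sym_monomial I \<rho>2)"

definition minors_trop_basis :: "nat \<Rightarrow> nat \<Rightarrow> bool" where
  "minors_trop_basis n r \<longleftrightarrow>
     (\<forall>A. sym_real n A \<longrightarrow>
        ((\<forall>I J. I \<subseteq> {..<n} \<longrightarrow> J \<subseteq> {..<n} \<longrightarrow> card I = r \<longrightarrow> card J = r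
                 \<longrightarrow> sym_trop_singular A I J)
         \<longleftrightarrow> (\<exists>M. sym_lift n A M \<and> rank_le_minors n r M)))"

end

theory Submission
  imports Defs "HOL-Library.FuncSet"
begin


definition tau :: "nat \<Rightarrow> nat \<Rightarrow> nat \<Rightarrow> nat" where
  "tau a b x = (if x = a then b else if x = b then a else x)"

lemma tau_tau[simp]: "tau a b (tau a b x) = x"
  unfolding tau_def by auto

lemma tau_mem: "a \<in> I \<Longrightarrow> b \<in> I \<Longrightarrow> (tau a b x \<in> I) = (x \<in> I)"
  unfolding tau_def by auto

lemma tau_order:
  assumes "a < b" "\<forall>c\<in>J. \<not> (a < c \<and> c < b)" "x \<in> J" "y \<in> J"
    "\<not> (x = a \<and> y = b)" "\<not> (x = b \<and> y = a)"
  shows "(tau a b x < tau a b y) = (x < y)"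
  proof -
  have "x \<noteq> a \<Longrightarrow> x \<noteq> b \<Longrightarrow> x < a \<or> x > b" using assms(2,3) by auto
  moreover have "y \<noteq> a \<Longrightarrow> y \<noteq> b \<Longrightarrow> y < a \<or> y > b" using assms(2,4) by auto
  ultimately show ?thesis using assms(1,5,6) unfolding tau_def by auto
qed

definition invset :: "nat set \<Rightarrow> (nat \<Rightarrow> nat) \<Rightarrow> (nat \<times> nat) set" where
  "invset I \<rho> = {(i, i'). i \<in> I \<and> i' \<in> I \<and> i < i' \<and> \<rho> i > \<rho> i'}"

lemma inversions_invset: "inversions I \<rho> = card (invset I \<rho>)"
  unfolding inversions_def invset_def by simp

lemma finite_invset: "finite I \<Longrightarrow> finite (invset I \<rho>)"
  unfolding invset_def by (rule finite_subset[of _ "I \<times> I"]) auto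

lemma sign_flip:
  assumes "finite S1" "finite S2" "card (S1 - {p}) = card (S2 - {p})" "(p \<in> S1) = (p \<notin> S2)"
  shows "(-1::complex) ^ card S1 = - ((-1) ^ card S2)"
proof (cases "p \<in> S1")
  case True
  then have n2: "p \<notin> S2" using assms(4) by blast
  have "card S1 = Suc (card (S1 - {p}))" using True assms(1) by (metis card.remove)
  moreover have "card S2 = card (S2 - {p})" using n2 by simp
  ultimately show ?thesis using assms(3) by simp
next
  case False
  then have n2: "p \<in> S2" using assms(4) by blast
  have "card S2 = Suc (card (S2 - {p}))" using n2 assms(2) by (metis card.remove)
  moreover have "card S1 = card (S1 - {p})" using False by simp
  ultimately show ?thesis using assms(3) by simp
qed

lemma invmap_rows:
  assumes "a \<in> I" "b \<in> I" "a < b" "\<forall>c\<in>I. \<not> (a < c \<and> c < b)"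
    "q \<in> invset I \<sigma> - {(a,b)}"
  shows "(\<lambda>(i,i'). (tau a b i, tau a b i')) q \<in> invset I (\<lambda>x. \<sigma> (tau a b x)) - {(a,b)}"
proof -
  obtain i i' where q: "q = (i,i')" by force
  have ii: "i \<in> I" "i' \<in> I" "i < i'" "\<sigma> i > \<sigma> i'" "(i,i') \<noteq> (a,b)"
    using assms(5) unfolding q invset_def by auto
  have "tau a b i < tau a b i'"
    using tau_order[OF assms(3,4) ii(1,2)] ii assms(3) by force
  moreover have "(tau a b i, tau a b i') \<noteq> (a,b)"
    using ii assms(3) unfolding tau_def by auto
  moreover have "tau a b i \<in> I" "tau a b i' \<in> I" using ii tau_mem[OF assms(1,2)] by blast+
  ultimately show ?thesis using ii(4) unfolding q invset_def by simp
qed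

lemma card_invol:
  assumes "finite S" "finite T" "\<And>x. x \<in> S \<Longrightarrow> f x \<in> T" "\<And>x. x \<in> T \<Longrightarrow> f x \<in> S"
    "\<And>x. f (f x) = x"
  shows "card S = card T"
proof -
  have inj: "inj f" by (metis assms(5) injI)
  have "card S \<le> card T"
    by (rule card_inj_on_le[OF inj_on_subset[OF inj]]) (use assms(2,3) in blast)+
  moreover have "card T \<le> card S"
    by (rule card_inj_on_le[OF inj_on_subset[OF inj]]) (use assms(1,4) in blast)+
  ultimately show ?thesis by simp
qed

lemma inv_rows:
  assumes fin: "finite I" and ab: "a \<in> I" "b \<in> I" "a < b" and adj: "\<forall>c\<in>I. \<not> (a < c \<and> c < b)"
    and inj: "inj_on \<rho> I"
  shows "(-1::complex) ^ inversions I (\<lambda>i. \<rho> (tau a b i)) = - ((-1) ^ inversions I \<rho>)"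
  unfolding inversions_invset
proof (rule sign_flip[where p = "(a,b)"])
  show "finite (invset I (\<lambda>i. \<rho> (tau a b i)))" "finite (invset I \<rho>)" using fin finite_invset by auto
  show "card (invset I (\<lambda>i. \<rho> (tau a b i)) - {(a, b)}) = card (invset I \<rho> - {(a, b)})"
  proof (rule card_invol[where f = "\<lambda>(i,i'). (tau a b i, tau a b i')"])
    show "finite (invset I (\<lambda>i. \<rho> (tau a b i)) - {(a, b)})" "finite (invset I \<rho> - {(a, b)})"
      using fin finite_invset by auto
    show "\<And>x. x \<in> invset I (\<lambda>i. \<rho> (tau a b i)) - {(a, b)} \<Longrightarrow>
         (case x of (i, i') \<Rightarrow> (tau a b i, tau a b i')) \<in> invset I \<rho> - {(a, b)}"
      using invmap_rows[OF ab adj, of _ "\<lambda>i. \<rho> (tau a b i)"] by simp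
    show "\<And>x. x \<in> invset I \<rho> - {(a, b)} \<Longrightarrow>
         (case x of (i, i') \<Rightarrow> (tau a b i, tau a b i')) \<in> invset I (\<lambda>i. \<rho> (tau a b i)) - {(a, b)}"
      using invmap_rows[OF ab adj, of _ \<rho>] by simp
    show "\<And>x. (case case x of (i, i') \<Rightarrow> (tau a b i, tau a b i') of (i, i') \<Rightarrow> (tau a b i, tau a b i')) = x"
      by auto
  qed
  have "\<rho> a \<noteq> \<rho> b" using inj ab by (metis inj_on_eq_iff less_irrefl_nat)
  moreover have "tau a b a = b" "tau a b b = a" unfolding tau_def by auto
  ultimately show "((a, b) \<in> invset I (\<lambda>i. \<rho> (tau a b i))) = ((a, b) \<notin> invset I \<rho>)"
    using ab unfolding invset_def by auto
qed

lemma inv_cols: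
  assumes fin: "finite I" and ab: "a \<in> J" "b \<in> J" "a < b" and adj: "\<forall>c\<in>J. \<not> (a < c \<and> c < b)"
    and inj: "inj_on \<rho> I" and im: "\<rho> ` I = J"
  shows "(-1::complex) ^ inversions I (\<lambda>i. tau a b (\<rho> i)) = - ((-1) ^ inversions I \<rho>)"
proof -
  obtain i0 i1 where i01: "i0 \<in> I" "i1 \<in> I" "\<rho> i0 = a" "\<rho> i1 = b" using ab im by blast
  have ne: "i0 \<noteq> i1" using i01 ab by auto
  define p where "p = (min i0 i1, max i0 i1)"
  have key: "\<And>i i'. i \<in> I \<Longrightarrow> i' \<in> I \<Longrightarrow> i < i' \<Longrightarrow> (i,i') \<noteq> p \<Longrightarrow>
     (tau a b (\<rho> i') < tau a b (\<rho> i)) = (\<rho> i' < \<rho> i)"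
  proof -
    fix i i' assume h: "i \<in> I" "i' \<in> I" "i < i'" "(i,i') \<noteq> p"
    have "\<not> (\<rho> i' = a \<and> \<rho> i = b)"
    proof
      assume "\<rho> i' = a \<and> \<rho> i = b"
      then have "i' = i0" "i = i1" using h(1,2) i01 inj inj_on_eq_iff by metis+
      then show False using h(3,4) unfolding p_def by (simp add: min_def max_def)
    qed
    moreover have "\<not> (\<rho> i' = b \<and> \<rho> i = a)"
    proof
      assume "\<rho> i' = b \<and> \<rho> i = a"
      then have "i' = i1" "i = i0" using h(1,2) i01 inj inj_on_eq_iff by metis+
      then show False using h(3,4) unfolding p_def by (simp add: min_def max_def)
    qed
    ultimately show "(tau a b (\<rho> i') < tau a b (\<rho> i)) = (\<rho> i' < \<rho> i)"
      using tau_order[OF ab(3) adj, of "\<rho> i'" "\<rho> i"] h im by auto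
  qed
  have eq: "invset I (\<lambda>i. tau a b (\<rho> i)) - {p} = invset I \<rho> - {p}"
    unfolding invset_def using key by auto
  have pI: "fst p \<in> I" "snd p \<in> I" "fst p < snd p" "{\<rho> (fst p), \<rho> (snd p)} = {a, b}"
    unfolding p_def using i01 ne by (auto simp: min_def max_def)
  have "tau a b a = b" "tau a b b = a" unfolding tau_def by auto
  then have "(p \<in> invset I (\<lambda>i. tau a b (\<rho> i))) = (p \<notin> invset I \<rho>)"
    using pI ab(3) unfolding invset_def by (cases p) (auto simp: doubleton_eq_iff)
  then show ?thesis unfolding inversions_invset
    using sign_flip[OF finite_invset[OF fin] finite_invset[OF fin], where p = p] eq by simp
qed

lemma prod_coeff_cong:
  assumes "\<And>i. i \<in> I \<Longrightarrow> a i = b i"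
  shows "prod_coeff a I g = prod_coeff b I g"
  unfolding prod_coeff_def using assms by (intro sum.cong prod.cong) auto

lemma prod_coeff_reindex:
  assumes h: "bij_betw h I' I"
  shows "prod_coeff a I g = prod_coeff (\<lambda>j. a (h j)) I' g"
proof -
  have inj: "inj_on h I'" using h bij_betw_def by blast
  have hI: "\<And>j. j \<in> I' \<Longrightarrow> h j \<in> I" using h bij_betwE by blast
  have hinv: "\<And>i. i \<in> I \<Longrightarrow> h (the_inv_into I' h i) = i" using h f_the_inv_into_f_bij_betw by metis
  have invI: "\<And>i. i \<in> I \<Longrightarrow> the_inv_into I' h i \<in> I'" using h
    by (metis bij_betw_def the_inv_into_into order_refl)
  have invh: "\<And>j. j \<in> I' \<Longrightarrow> the_inv_into I' h (h j) = j" using inj the_inv_into_f_f by metis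
  have sumr: "\<And>\<alpha>. (\<Sum>j\<in>I'. \<alpha> (h j)) = (\<Sum>i\<in>I. \<alpha> i)" using sum.reindex_bij_betw[OF h] by blast
  have prodr: "\<And>\<alpha>. (\<Prod>j\<in>I'. a (h j) (\<alpha> (h j))) = (\<Prod>i\<in>I. a i (\<alpha> i))"
    by (rule prod.reindex_bij_betw[OF h])
  show ?thesis
  unfolding prod_coeff_def
  apply (rule sum.reindex_bij_witness[where i = "\<lambda>\<beta> i. if i \<in> I then \<beta> (the_inv_into I' h i) else 0"
      and j = "\<lambda>\<alpha> j. if j \<in> I' then \<alpha> (h j) else 0"])
  subgoal using hinv invI by auto
  subgoal for \<alpha> using hI sumr[of \<alpha>] by (auto cong: sum.cong)
  subgoal using invh hI by auto
  subgoal for \<beta> using invI hinv sumr[of "\<lambda>i. \<beta> (the_inv_into I' h i)"] invh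
    apply auto by metis
  subgoal for \<alpha> using prodr[of \<alpha>] by (auto cong: prod.cong)
  done
qed

lemma sum_invol_zero:
  assumes "\<And>x. x \<in> B \<Longrightarrow> \<Phi> x \<in> B" "\<And>x. x \<in> B \<Longrightarrow> \<Phi> (\<Phi> x) = x"
    "\<And>x. x \<in> B \<Longrightarrow> t (\<Phi> x) = - t x"
  shows "sum t B = (0::complex)"
proof -
  have "sum t B = sum (\<lambda>x. t (\<Phi> x)) B"
    by (rule sum.reindex_bij_witness[where i = \<Phi> and j = \<Phi>]) (use assms in auto)
  also have "\<dots> = - sum t B" using assms(3) by (simp add: sum_negf)
  finally show ?thesis by simp
qed

lemma tau_bij: "a \<in> I \<Longrightarrow> b \<in> I \<Longrightarrow> bij_betw (tau a b) I I"
  by (rule bij_betw_byWitness[where f' = "tau a b"]) (auto simp: tau_mem)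

lemma inversions_cong: "(\<And>i. i \<in> I \<Longrightarrow> \<rho> i = \<sigma> i) \<Longrightarrow> inversions I \<rho> = inversions I \<sigma>"
  unfolding inversions_def by (intro arg_cong[where f = card]) auto

lemma bijs_inj: "\<rho> \<in> bijs I J \<Longrightarrow> inj_on \<rho> I"
  unfolding bijs_def bij_betw_def by auto

lemma bijs_img: "\<rho> \<in> bijs I J \<Longrightarrow> \<rho> ` I = J"
  unfolding bijs_def bij_betw_def by auto

lemma minor_zero_rows:
  assumes fin: "finite I" and ab: "a \<in> I" "b \<in> I" "a < b" and adj: "\<forall>c\<in>I. \<not> (a < c \<and> c < b)"
    and eq: "N a = N b"
  shows "minor_coeff N I J g = 0"
  unfolding minor_coeff_def
proof (rule sum_invol_zero[where \<Phi> = "\<lambda>\<rho> i. \<rho> (tau a b i)"])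
  fix \<rho> assume r: "\<rho> \<in> bijs I J"
  have tb: "bij_betw (tau a b) I I" using tau_bij ab by blast
  show "(\<lambda>i. \<rho> (tau a b i)) \<in> bijs I J"
    using r bij_betw_trans[OF tb] unfolding bijs_def comp_def
    by (auto simp: tau_def ab)
  show "(\<lambda>i. (\<lambda>i. \<rho> (tau a b i)) (tau a b i)) = \<rho>" by simp
  have Nt: "\<And>j. N (tau a b j) = N j" using eq unfolding tau_def by auto
  have "prod_coeff (\<lambda>i. N i (\<rho> (tau a b i))) I g = prod_coeff (\<lambda>j. N (tau a b j) (\<rho> (tau a b (tau a b j)))) I g"
    by (rule prod_coeff_reindex[OF tb])
  also have "\<dots> = prod_coeff (\<lambda>j. N j (\<rho> j)) I g" using Nt by simp
  finally show "(- 1) ^ inversions I (\<lambda>i. \<rho> (tau a b i)) * prod_coeff (\<lambda>i. N i (\<rho> (tau a b i))) I g =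
         - ((- 1) ^ inversions I \<rho> * prod_coeff (\<lambda>i. N i (\<rho> i)) I g)"
    using inv_rows[OF fin ab adj bijs_inj[OF r]] by simp
qed

lemma minor_zero_cols:
  assumes fin: "finite I" and ab: "a \<in> J" "b \<in> J" "a < b" and adj: "\<forall>c\<in>J. \<not> (a < c \<and> c < b)"
    and eq: "\<And>i. N i a = N i b"
  shows "minor_coeff N I J g = 0"
  unfolding minor_coeff_def
proof (rule sum_invol_zero[where \<Phi> = "\<lambda>\<rho> i. if i \<in> I then tau a b (\<rho> i) else i"])
  fix \<rho> assume r: "\<rho> \<in> bijs I J"
  have tb: "bij_betw (tau a b) J J" using tau_bij ab by blast
  have "bij_betw (\<lambda>i. tau a b (\<rho> i)) I J"
    using r bij_betw_trans[OF _ tb, of \<rho> I] unfolding bijs_def comp_def by auto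
  then show "(\<lambda>i. if i \<in> I then tau a b (\<rho> i) else i) \<in> bijs I J"
    unfolding bijs_def by (auto intro: bij_betw_cong[THEN iffD1, rotated])
  show "(\<lambda>i. if i \<in> I then tau a b ((\<lambda>i. if i \<in> I then tau a b (\<rho> i) else i) i) else i) = \<rho>"
    using r unfolding bijs_def by auto
  have Nt: "\<And>i j. N i (tau a b j) = N i j" using eq unfolding tau_def by auto
  have "prod_coeff (\<lambda>i. N i (if i \<in> I then tau a b (\<rho> i) else i)) I g = prod_coeff (\<lambda>i. N i (\<rho> i)) I g"
    by (rule prod_coeff_cong) (simp add: Nt)
  moreover have "inversions I (\<lambda>i. if i \<in> I then tau a b (\<rho> i) else i) = inversions I (\<lambda>i. tau a b (\<rho> i))"
    by (rule inversions_cong) simp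
  ultimately show "(- 1) ^ inversions I (\<lambda>i. if i \<in> I then tau a b (\<rho> i) else i) *
         prod_coeff (\<lambda>i. N i (if i \<in> I then tau a b (\<rho> i) else i)) I g =
         - ((- 1) ^ inversions I \<rho> * prod_coeff (\<lambda>i. N i (\<rho> i)) I g)"
    using inv_cols[OF fin ab adj bijs_inj[OF r] bijs_img[OF r]] by simp
qed



definition fwd :: "(nat \<Rightarrow> nat) \<Rightarrow> nat set \<Rightarrow> (nat \<Rightarrow> nat) \<Rightarrow> nat \<Rightarrow> nat" where
  "fwd f I \<rho> = (\<lambda>x. if x \<in> f ` I then f (\<rho> (the_inv_into I f x)) else x)"

definition bwd :: "(nat \<Rightarrow> nat) \<Rightarrow> nat set \<Rightarrow> nat set \<Rightarrow> (nat \<Rightarrow> nat) \<Rightarrow> nat \<Rightarrow> nat" where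
  "bwd f I J \<sigma> = (\<lambda>i. if i \<in> I then the_inv_into J f (\<sigma> (f i)) else i)"

context
  fixes f :: "nat \<Rightarrow> nat" and I J :: "nat set"
  assumes injI: "inj_on f I" and injJ: "inj_on f J"
begin

lemma fwd_at: "i \<in> I \<Longrightarrow> fwd f I \<rho> (f i) = f (\<rho> i)"
  unfolding fwd_def using injI by (simp add: the_inv_into_f_f)

lemma fwd_bijs: "\<rho> \<in> bijs I J \<Longrightarrow> fwd f I \<rho> \<in> bijs (f ` I) (f ` J)"
proof -
  assume r: "\<rho> \<in> bijs I J"
  have b1: "bij_betw (the_inv_into I f) (f ` I) I" using injI by (rule bij_betw_the_inv_into[OF inj_on_imp_bij_betw])
  have b2: "bij_betw \<rho> I J" using r unfolding bijs_def by auto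
  have b3: "bij_betw f J (f ` J)" using injJ by (rule inj_on_imp_bij_betw)
  have "bij_betw (f \<circ> \<rho> \<circ> the_inv_into I f) (f ` I) (f ` J)"
    using bij_betw_trans[OF bij_betw_trans[OF b1 b2] b3] by (simp add: comp_assoc)
  then have "bij_betw (fwd f I \<rho>) (f ` I) (f ` J)"
    by (rule bij_betw_cong[THEN iffD1, rotated]) (simp add: fwd_def)
  then show ?thesis unfolding bijs_def fwd_def by auto
qed

lemma bwd_bijs: "\<sigma> \<in> bijs (f ` I) (f ` J) \<Longrightarrow> bwd f I J \<sigma> \<in> bijs I J"
proof -
  assume r: "\<sigma> \<in> bijs (f ` I) (f ` J)"
  have b1: "bij_betw (the_inv_into J f) (f ` J) J" using injJ by (rule bij_betw_the_inv_into[OF inj_on_imp_bij_betw])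
  have b2: "bij_betw \<sigma> (f ` I) (f ` J)" using r unfolding bijs_def by auto
  have b3: "bij_betw f I (f ` I)" using injI by (rule inj_on_imp_bij_betw)
  have "bij_betw (the_inv_into J f \<circ> \<sigma> \<circ> f) I J"
    using bij_betw_trans[OF bij_betw_trans[OF b3 b2] b1] by (simp add: comp_assoc)
  then have "bij_betw (bwd f I J \<sigma>) I J"
    by (rule bij_betw_cong[THEN iffD1, rotated]) (simp add: bwd_def)
  then show ?thesis unfolding bijs_def bwd_def by auto
qed

lemma bwd_fwd: "\<rho> \<in> bijs I J \<Longrightarrow> bwd f I J (fwd f I \<rho>) = \<rho>"
proof
  fix i assume r: "\<rho> \<in> bijs I J"
  show "bwd f I J (fwd f I \<rho>) i = \<rho> i"
  proof (cases "i \<in> I")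
    case True
    then have "\<rho> i \<in> J" using r unfolding bijs_def bij_betw_def by auto
    then show ?thesis using True by (simp add: bwd_def fwd_at the_inv_into_f_f[OF injJ])
  next
    case False
    then show ?thesis using r unfolding bwd_def bijs_def by auto
  qed
qed

lemma f_bwd: "\<sigma> \<in> bijs (f ` I) (f ` J) \<Longrightarrow> i \<in> I \<Longrightarrow> f (bwd f I J \<sigma> i) = \<sigma> (f i)"
proof -
  assume r: "\<sigma> \<in> bijs (f ` I) (f ` J)" and i: "i \<in> I"
  have "\<sigma> (f i) \<in> f ` J" using r i unfolding bijs_def bij_betw_def by auto
  then show ?thesis using i unfolding bwd_def by (simp add: f_the_inv_into_f[OF injJ])
qed

lemma fwd_bwd: "\<sigma> \<in> bijs (f ` I) (f ` J) \<Longrightarrow> fwd f I (bwd f I J \<sigma>) = \<sigma>"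
proof
  fix x assume r: "\<sigma> \<in> bijs (f ` I) (f ` J)"
  show "fwd f I (bwd f I J \<sigma>) x = \<sigma> x"
  proof (cases "x \<in> f ` I")
    case True
    then obtain i where i: "i \<in> I" "x = f i" by auto
    then show ?thesis using r by (simp add: fwd_at f_bwd)
  next
    case False
    then show ?thesis using r unfolding fwd_def bijs_def by auto
  qed
qed

lemma trop_relabel: "trop_value (\<lambda>i j. A (f i) (f j)) I \<rho> = trop_value A (f ` I) (fwd f I \<rho>)"
  unfolding trop_value_def using injI by (simp add: sum.reindex fwd_at)

lemma mono_relabel: "finite I \<Longrightarrow> sym_monomial (f ` I) (fwd f I \<rho>) = image_mset ((`) f) (sym_monomial I \<rho>)"
proof -
  assume fin: "finite I"
  have "mset_set (f ` I) = image_mset f (mset_set I)" by (simp add: image_mset_mset_set[OF injI])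
  then have "sym_monomial (f ` I) (fwd f I \<rho>) = image_mset (\<lambda>i. {f i, fwd f I \<rho> (f i)}) (mset_set I)"
    unfolding sym_monomial_def by (simp add: multiset.map_comp comp_def)
  also have "\<dots> = image_mset (\<lambda>i. f ` {i, \<rho> i}) (mset_set I)"
    by (rule image_mset_cong) (use fin in \<open>simp add: fwd_at\<close>)
  also have "\<dots> = image_mset ((`) f) (sym_monomial I \<rho>)"
    unfolding sym_monomial_def by (simp add: multiset.map_comp comp_def)
  finally show ?thesis .
qed

lemma sing_relabel:
  assumes fin: "finite I" and s: "sym_trop_singular A (f ` I) (f ` J)"
  shows "sym_trop_singular (\<lambda>i j. A (f i) (f j)) I J"
proof -
  obtain \<rho>1 \<rho>2 where r: "\<rho>1 \<in> bijs (f ` I) (f ` J)" "\<rho>2 \<in> bijs (f ` I) (f ` J)"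
    "\<forall>\<sigma>\<in>bijs (f ` I) (f ` J). trop_value A (f ` I) \<rho>1 \<le> trop_value A (f ` I) \<sigma>"
    "trop_value A (f ` I) \<rho>2 = trop_value A (f ` I) \<rho>1"
    "sym_monomial (f ` I) \<rho>1 \<noteq> sym_monomial (f ` I) \<rho>2"
    using s unfolding sym_trop_singular_def by blast
  let ?A = "\<lambda>i j. A (f i) (f j)"
  have b: "bwd f I J \<rho>1 \<in> bijs I J" "bwd f I J \<rho>2 \<in> bijs I J" using r bwd_bijs by auto
  have m: "\<forall>\<sigma>\<in>bijs I J. trop_value ?A I (bwd f I J \<rho>1) \<le> trop_value ?A I \<sigma>"
    using r(1,3) fwd_bijs by (simp add: trop_relabel fwd_bwd)
  have v: "trop_value ?A I (bwd f I J \<rho>2) = trop_value ?A I (bwd f I J \<rho>1)"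
    using r by (simp add: trop_relabel fwd_bwd)
  have mo: "sym_monomial I (bwd f I J \<rho>1) \<noteq> sym_monomial I (bwd f I J \<rho>2)"
    using r(1,2,5) mono_relabel[OF fin] by (metis fwd_bwd)
  show ?thesis unfolding sym_trop_singular_def using b m v mo by blast
qed

end

lemma invset_relabel:
  assumes sI: "strict_mono_on I f" and sJ: "strict_mono_on J f" and r: "\<rho> \<in> bijs I J"
  shows "invset (f ` I) (fwd f I \<rho>) = (\<lambda>(i,i'). (f i, f i')) ` invset I \<rho>"
proof -
  have injI: "inj_on f I" and injJ: "inj_on f J" using sI sJ strict_mono_on_imp_inj_on by auto
  have rJ: "\<And>i. i \<in> I \<Longrightarrow> \<rho> i \<in> J" using r unfolding bijs_def bij_betw_def by auto
  have fa: "\<And>i. i \<in> I \<Longrightarrow> fwd f I \<rho> (f i) = f (\<rho> i)" using fwd_at[OF injI injJ] by blast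
  show ?thesis
  proof (rule set_eqI, rule iffI)
    fix q assume "q \<in> invset (f ` I) (fwd f I \<rho>)"
    then obtain i i' where q: "q = (f i, f i')" "i \<in> I" "i' \<in> I" "f i < f i'"
      "fwd f I \<rho> (f i) > fwd f I \<rho> (f i')"
      unfolding invset_def by auto
    then have "i < i'" "\<rho> i > \<rho> i'" using strict_mono_on_less[OF sI] strict_mono_on_less[OF sJ] rJ fa
      by auto
    then show "q \<in> (\<lambda>(i,i'). (f i, f i')) ` invset I \<rho>" using q unfolding invset_def by auto
  next
    fix q assume "q \<in> (\<lambda>(i,i'). (f i, f i')) ` invset I \<rho>"
    then obtain i i' where q: "q = (f i, f i')" "i \<in> I" "i' \<in> I" "i < i'" "\<rho> i > \<rho> i'"
      unfolding invset_def by auto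
    then have "f i < f i'" "fwd f I \<rho> (f i) > fwd f I \<rho> (f i')"
      using strict_mono_on_less[OF sI] strict_mono_on_less[OF sJ] rJ fa by auto
    then show "q \<in> invset (f ` I) (fwd f I \<rho>)" using q unfolding invset_def by auto
  qed
qed

lemma inversions_relabel:
  assumes sI: "strict_mono_on I f" and sJ: "strict_mono_on J f" and r: "\<rho> \<in> bijs I J"
  shows "inversions (f ` I) (fwd f I \<rho>) = inversions I \<rho>"
proof -
  have injI: "inj_on f I" using sI strict_mono_on_imp_inj_on by auto
  have "inj_on (\<lambda>(i,i'). (f i, f i')) (invset I \<rho>)"
    using injI unfolding invset_def inj_on_def by auto
  then show ?thesis unfolding inversions_invset invset_relabel[OF assms] by (rule card_image)
qed

lemma minor_relabel:
  assumes sI: "strict_mono_on I f" and sJ: "strict_mono_on J f"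
  shows "minor_coeff (\<lambda>i j. N (f i) (f j)) I J g = minor_coeff N (f ` I) (f ` J) g"
proof -
  have injI: "inj_on f I" and injJ: "inj_on f J" using sI sJ strict_mono_on_imp_inj_on by auto
  note L = fwd_bijs[OF injI injJ] bwd_bijs[OF injI injJ] bwd_fwd[OF injI injJ] fwd_bwd[OF injI injJ]
  show ?thesis unfolding minor_coeff_def
  proof (rule sum.reindex_bij_witness[where j = "fwd f I" and i = "bwd f I J"])
    fix \<rho> assume r: "\<rho> \<in> bijs I J"
    show "bwd f I J (fwd f I \<rho>) = \<rho>" "fwd f I \<rho> \<in> bijs (f ` I) (f ` J)" using r L by auto
    have bI: "bij_betw f I (f ` I)" using injI by (rule inj_on_imp_bij_betw)
    have "prod_coeff (\<lambda>x. N x (fwd f I \<rho> x)) (f ` I) g = prod_coeff (\<lambda>i. N (f i) (fwd f I \<rho> (f i))) I g"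
      by (rule prod_coeff_reindex[OF bI])
    also have "\<dots> = prod_coeff (\<lambda>i. N (f i) (f (\<rho> i))) I g"
      by (rule prod_coeff_cong) (simp add: fwd_at[OF injI injJ])
    finally show "(- 1) ^ inversions (f ` I) (fwd f I \<rho>) * prod_coeff (\<lambda>x. N x (fwd f I \<rho> x)) (f ` I) g =
         (- 1) ^ inversions I \<rho> * prod_coeff (\<lambda>i. N (f i) (f (\<rho> i))) I g"
      using inversions_relabel[OF sI sJ r] by simp
  next
    fix \<sigma> assume r: "\<sigma> \<in> bijs (f ` I) (f ` J)"
    show "fwd f I (bwd f I J \<sigma>) = \<sigma>" "bwd f I J \<sigma> \<in> bijs I J" using r L by auto
  qed
qed



lemma bijs_finite:
  assumes "finite I" "finite J" shows "finite (bijs I J)"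
proof -
  have "bijs I J \<subseteq> (\<lambda>h x. if x \<in> I then h x else x) ` (PiE I (\<lambda>_. J))"
  proof
    fix \<rho> assume r: "\<rho> \<in> bijs I J"
    have "restrict \<rho> I \<in> PiE I (\<lambda>_. J)" using r unfolding bijs_def bij_betw_def by auto
    moreover have "\<rho> = (\<lambda>x. if x \<in> I then restrict \<rho> I x else x)" using r unfolding bijs_def by auto
    ultimately show "\<rho> \<in> (\<lambda>h x. if x \<in> I then h x else x) ` (PiE I (\<lambda>_. J))" by blast
  qed
  moreover have "finite (PiE I (\<lambda>_. J))" using assms by (simp add: finite_PiE)
  ultimately show ?thesis by (meson finite_imageI finite_subset)
qed

lemma bijs_nonempty:
  assumes "finite I" "finite J" "card I = card J" shows "bijs I J \<noteq> {}"
proof -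
  obtain h where h: "bij_betw h I J" using finite_same_card_bij assms by blast
  have "bij_betw (\<lambda>x. if x \<in> I then h x else x) I J"
    using h by (rule bij_betw_cong[THEN iffD1, rotated]) simp
  then have "(\<lambda>x. if x \<in> I then h x else x) \<in> bijs I J" unfolding bijs_def by auto
  then show ?thesis by blast
qed

lemma exists_min:
  assumes "finite I" "finite J" "card I = card J"
  obtains \<rho> where "\<rho> \<in> bijs I J" "\<forall>\<sigma>\<in>bijs I J. trop_value A I \<rho> \<le> trop_value A I \<sigma>"
proof -
  let ?B = "bijs I J"
  let ?m = "Min (trop_value A I ` ?B)"
  have fin: "finite (trop_value A I ` ?B)" using bijs_finite assms by auto
  have ne: "trop_value A I ` ?B \<noteq> {}" using bijs_nonempty assms by auto
  obtain \<rho> where "\<rho> \<in> ?B" "trop_value A I \<rho> = ?m" using Min_in[OF fin ne] by auto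
  moreover have "\<forall>\<sigma>\<in>?B. ?m \<le> trop_value A I \<sigma>" using Min_le[OF fin] by auto
  ultimately show ?thesis using that by auto
qed

lemma two_pairs:
  assumes "{#{p,u::nat},{q,v}#} = {#{p,v},{q,u}#}" "p \<noteq> q" "u \<noteq> v"
  shows False
proof -
  have "{p,u} \<in># {#{p,v},{q,u}#}" using assms(1) by (metis add_mset_commute union_single_eq_member)
  then have "{p,u} = {p,v} \<or> {p,u} = {q,u}" by auto
  then show False using assms(2,3) by (auto simp: doubleton_eq_iff)
qed

lemma two_pairs':
  assumes "{#{p,u::nat},{q,v}#} + R = {#{p,v},{q,u}#} + R" "p \<noteq> q" "u \<noteq> v"
  shows False
  using two_pairs[of p u q v] assms by (metis add_right_cancel)

lemma mono_split:
  assumes "finite I" "a \<in> I" "b \<in> I" "a \<noteq> b"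
  shows "sym_monomial I \<sigma> = {#{a, \<sigma> a}, {b, \<sigma> b}#} + image_mset (\<lambda>i. {i, \<sigma> i}) (mset_set (I - {a,b}))"
proof -
  have "mset_set I = add_mset a (add_mset b (mset_set (I - {a,b})))"
    using assms by (metis Diff_insert2 finite_Diff insert_Diff_single insert_absorb insert_iff
        mset_set.insert_remove insert_Diff)
  then show ?thesis unfolding sym_monomial_def by simp
qed

lemma sing_rows:
  assumes fin: "finite I" "finite J" "card I = card J" and ab: "a \<in> I" "b \<in> I" "a \<noteq> b"
    and eq: "A a = A b"
  shows "sym_trop_singular A I J"
proof -
  obtain \<rho> where r: "\<rho> \<in> bijs I J" "\<forall>\<sigma>\<in>bijs I J. trop_value A I \<rho> \<le> trop_value A I \<sigma>"
    using exists_min[OF fin] by blast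
  let ?r2 = "\<lambda>i. \<rho> (tau a b i)"
  have tb: "bij_betw (tau a b) I I" using tau_bij ab by blast
  have r2: "?r2 \<in> bijs I J"
    using r(1) bij_betw_trans[OF tb] unfolding bijs_def comp_def by (auto simp: tau_def ab)
  have At: "\<And>j. A (tau a b j) = A j" using eq unfolding tau_def by auto
  have "trop_value A I ?r2 = (\<Sum>i\<in>I. A (tau a b i) (\<rho> (tau a b i)))"
    unfolding trop_value_def by (simp add: At)
  also have "\<dots> = trop_value A I \<rho>" unfolding trop_value_def
    by (rule sum.reindex_bij_betw[OF tb])
  finally have v: "trop_value A I ?r2 = trop_value A I \<rho>" .
  have inj: "inj_on \<rho> I" using bijs_inj[OF r(1)] .
  have "image_mset (\<lambda>i. {i, ?r2 i}) (mset_set (I - {a,b})) = image_mset (\<lambda>i. {i, \<rho> i}) (mset_set (I - {a,b}))"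
    by (rule image_mset_cong) (use fin in \<open>auto simp: tau_def\<close>)
  moreover have "?r2 a = \<rho> b" "?r2 b = \<rho> a" unfolding tau_def by auto
  moreover have "\<rho> a \<noteq> \<rho> b" using inj ab inj_on_eq_iff by metis
  moreover have "\<rho> a \<noteq> \<rho> b" using inj ab inj_on_eq_iff by metis
  ultimately have s2: "sym_monomial I ?r2 = {#{a, \<rho> b}, {b, \<rho> a}#} + image_mset (\<lambda>i. {i, \<rho> i}) (mset_set (I - {a,b}))"
    using mono_split[OF fin(1) ab, of ?r2] by simp
  have s1: "sym_monomial I \<rho> = {#{a, \<rho> a}, {b, \<rho> b}#} + image_mset (\<lambda>i. {i, \<rho> i}) (mset_set (I - {a,b}))"
    using mono_split[OF fin(1) ab, of \<rho>] by simp
  have "sym_monomial I \<rho> \<noteq> sym_monomial I ?r2"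
  proof
    assume "sym_monomial I \<rho> = sym_monomial I ?r2"
    with s1 s2 have "{#{a, \<rho> a}, {b, \<rho> b}#} + image_mset (\<lambda>i. {i, \<rho> i}) (mset_set (I - {a,b}))
       = {#{a, \<rho> b}, {b, \<rho> a}#} + image_mset (\<lambda>i. {i, \<rho> i}) (mset_set (I - {a,b}))" by metis
    then show False using two_pairs' ab(3) \<open>\<rho> a \<noteq> \<rho> b\<close> by blast
  qed
  then show ?thesis unfolding sym_trop_singular_def using r r2 v by blast
qed

lemma sing_cols:
  assumes fin: "finite I" "finite J" "card I = card J" and ab: "a \<in> J" "b \<in> J" "a \<noteq> b"
    and eq: "\<And>i. A i a = A i b"
  shows "sym_trop_singular A I J"
proof -
  obtain \<rho> where r: "\<rho> \<in> bijs I J" "\<forall>\<sigma>\<in>bijs I J. trop_value A I \<rho> \<le> trop_value A I \<sigma>"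
    using exists_min[OF fin] by blast
  let ?r2 = "\<lambda>i. if i \<in> I then tau a b (\<rho> i) else i"
  have tb: "bij_betw (tau a b) J J" using tau_bij ab by blast
  have "bij_betw (\<lambda>i. tau a b (\<rho> i)) I J"
    using r bij_betw_trans[OF _ tb, of \<rho> I] unfolding bijs_def comp_def by auto
  then have r2: "?r2 \<in> bijs I J"
    unfolding bijs_def by (auto intro: bij_betw_cong[THEN iffD1, rotated])
  have At: "\<And>i j. A i (tau a b j) = A i j" using eq unfolding tau_def by auto
  have v: "trop_value A I ?r2 = trop_value A I \<rho>"
    unfolding trop_value_def by (rule sum.cong) (auto simp: At)
  have inj: "inj_on \<rho> I" using bijs_inj[OF r(1)] .
  obtain i0 i1 where i01: "i0 \<in> I" "i1 \<in> I" "\<rho> i0 = a" "\<rho> i1 = b" using ab bijs_img[OF r(1)] by blast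
  have ne: "i0 \<noteq> i1" using i01 ab by auto
  have "image_mset (\<lambda>i. {i, ?r2 i}) (mset_set (I - {i0,i1})) = image_mset (\<lambda>i. {i, \<rho> i}) (mset_set (I - {i0,i1}))"
  proof (rule image_mset_cong)
    fix i assume "i \<in># mset_set (I - {i0, i1})"
    then have i: "i \<in> I" "i \<noteq> i0" "i \<noteq> i1" using fin by auto
    then have "\<rho> i \<noteq> a" "\<rho> i \<noteq> b" using i01 inj inj_on_eq_iff by metis+
    then show "{i, ?r2 i} = {i, \<rho> i}" using i by (simp add: tau_def)
  qed
  moreover have "?r2 i0 = b" "?r2 i1 = a" using i01 unfolding tau_def by auto
  ultimately have s2: "sym_monomial I ?r2 = {#{i0, b}, {i1, a}#} + image_mset (\<lambda>i. {i, \<rho> i}) (mset_set (I - {i0,i1}))"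
    using mono_split[OF fin(1) i01(1,2) ne, of ?r2] by simp
  have s1: "sym_monomial I \<rho> = {#{i0, a}, {i1, b}#} + image_mset (\<lambda>i. {i, \<rho> i}) (mset_set (I - {i0,i1}))"
    using mono_split[OF fin(1) i01(1,2) ne, of \<rho>] i01 by simp
  have "sym_monomial I \<rho> \<noteq> sym_monomial I ?r2"
  proof
    assume "sym_monomial I \<rho> = sym_monomial I ?r2"
    with s1 s2 have "{#{i0, a}, {i1, b}#} + image_mset (\<lambda>i. {i, \<rho> i}) (mset_set (I - {i0,i1}))
       = {#{i0, b}, {i1, a}#} + image_mset (\<lambda>i. {i, \<rho> i}) (mset_set (I - {i0,i1}))" by metis
    then show False using two_pairs' ab(3) ne by blast
  qed
  then show ?thesis unfolding sym_trop_singular_def using r r2 v by blast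
qed

lemma sing_cong:
  assumes "\<And>i j. i \<in> I \<Longrightarrow> j \<in> J \<Longrightarrow> A i j = B i j"
  shows "sym_trop_singular A I J = sym_trop_singular B I J"
proof -
  have "\<And>\<rho>. \<rho> \<in> bijs I J \<Longrightarrow> trop_value A I \<rho> = trop_value B I \<rho>"
    unfolding trop_value_def bijs_def bij_betw_def using assms by (intro sum.cong) auto
  then show ?thesis unfolding sym_trop_singular_def by (metis (no_types, lifting))
qed



lemma basis_zero: "minors_trop_basis 0 r"
  unfolding minors_trop_basis_def
proof (intro allI impI)
  fix A :: "nat \<Rightarrow> nat \<Rightarrow> real" assume "sym_real 0 A"
  show "(\<forall>I J. I \<subseteq> {..<0} \<longrightarrow> J \<subseteq> {..<0} \<longrightarrow> card I = r \<longrightarrow> card J = r \<longrightarrow> sym_trop_singular A I J) =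
        (\<exists>M. sym_lift 0 A M \<and> rank_le_minors 0 r M)"
  proof (cases "r = 0")
    case False
    then show ?thesis unfolding sym_lift_def rank_le_minors_def by auto
  next
    case True
    have b: "bijs {} {} = {id}" unfolding bijs_def by auto
    have ns: "\<not> sym_trop_singular A {} {}" unfolding sym_trop_singular_def b by auto
    have pc: "prod_coeff a {} 0 = 1" for a
    proof -
      have "{\<alpha>. (\<forall>i\<in>{}. a i (\<alpha> i) \<noteq> 0) \<and> (\<forall>i. i \<notin> {} \<longrightarrow> \<alpha> i = (0::real)) \<and> (\<Sum>i\<in>{}. \<alpha> i) = (0::real)}
            = {\<lambda>_. 0}" by auto
      then show ?thesis unfolding prod_coeff_def by simp
    qed
    have "minor_coeff M {} {} 0 = 1" for M
      unfolding minor_coeff_def b inversions_def by (simp add: pc)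
    then have "\<not> minor_vanishes M {} {}" for M unfolding minor_vanishes_def by (metis zero_neq_one)
    then have "\<not> rank_le_minors 0 0 M" for M unfolding rank_le_minors_def by auto
    then show ?thesis using True ns by auto
  qed
qed

definition dd :: "nat \<Rightarrow> nat \<Rightarrow> nat" where "dd k i = (if i = Suc k then k else i)"

lemma dd_mono:
  assumes "I \<subseteq> {..<Suc (Suc k)}" "\<not> (k \<in> I \<and> Suc k \<in> I)"
  shows "strict_mono_on I (dd k)"
  unfolding strict_mono_on_def dd_def using assms by (auto simp: less_Suc_eq)

lemma dd_img: "I \<subseteq> {..<Suc (Suc k)} \<Longrightarrow> dd k ` I \<subseteq> {..<Suc k}"
  unfolding dd_def by auto

lemma dd_small: "i < Suc k \<Longrightarrow> dd k i = i"
  unfolding dd_def by auto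

lemma card_dd:
  assumes "I \<subseteq> {..<Suc (Suc k)}" "\<not> (k \<in> I \<and> Suc k \<in> I)"
  shows "card (dd k ` I) = card I"
  using card_image strict_mono_on_imp_inj_on[OF dd_mono[OF assms]] by blast

theorem corollary3:
  fixes n r :: nat
  assumes "\<not> minors_trop_basis n r"
  shows "\<not> minors_trop_basis (Suc n) r"
proof
  assume B: "minors_trop_basis (Suc n) r"
  obtain k where n: "n = Suc k" using assms basis_zero by (cases n) auto
  obtain A where symA: "sym_real n A" and
    neq: "(\<forall>I J. I \<subseteq> {..<n} \<longrightarrow> J \<subseteq> {..<n} \<longrightarrow> card I = r \<longrightarrow> card J = r \<longrightarrow> sym_trop_singular A I J)
       \<noteq> (\<exists>M. sym_lift n A M \<and> rank_le_minors n r M)"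
    using assms unfolding minors_trop_basis_def by blast
  define A' where "A' = (\<lambda>i j. A (dd k i) (dd k j))"
  have symA': "sym_real (Suc n) A'"
    using symA dd_img[of "{i}" k for i] unfolding sym_real_def A'_def n by auto
  have B': "(\<forall>I J. I \<subseteq> {..<Suc n} \<longrightarrow> J \<subseteq> {..<Suc n} \<longrightarrow> card I = r \<longrightarrow> card J = r \<longrightarrow> sym_trop_singular A' I J)
       = (\<exists>M. sym_lift (Suc n) A' M \<and> rank_le_minors (Suc n) r M)"
    using B symA' unfolding minors_trop_basis_def by blast
  have ddk: "dd k k = dd k (Suc k)" unfolding dd_def by simp
  have adj: "\<forall>c\<in>X. \<not> (k < c \<and> c < Suc k)" for X :: "nat set" by auto
  consider (a) "\<forall>I J. I \<subseteq> {..<n} \<longrightarrow> J \<subseteq> {..<n} \<longrightarrow> card I = r \<longrightarrow> card J = r \<longrightarrow> sym_trop_singular A I J"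
      "\<not> (\<exists>M. sym_lift n A M \<and> rank_le_minors n r M)"
    | (b) "\<not> (\<forall>I J. I \<subseteq> {..<n} \<longrightarrow> J \<subseteq> {..<n} \<longrightarrow> card I = r \<longrightarrow> card J = r \<longrightarrow> sym_trop_singular A I J)"
      "\<exists>M. sym_lift n A M \<and> rank_le_minors n r M"
    using neq by blast
  then show False
  proof cases
    case a
    have L: "sym_trop_singular A' I J" if IJ: "I \<subseteq> {..<Suc n}" "J \<subseteq> {..<Suc n}" "card I = r" "card J = r" for I J
    proof -
      have fin: "finite I" "finite J" "card I = card J" using IJ finite_subset by auto
      consider (rows) "k \<in> I \<and> Suc k \<in> I" | (cols) "k \<in> J \<and> Suc k \<in> J"
        | (other) "\<not> (k \<in> I \<and> Suc k \<in> I)" "\<not> (k \<in> J \<and> Suc k \<in> J)" by blast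
      then show ?thesis
      proof cases
        case rows
        show ?thesis by (rule sing_rows[OF fin, of k "Suc k"]) (use rows ddk in \<open>auto simp: A'_def\<close>)
      next
        case cols
        show ?thesis by (rule sing_cols[OF fin, of k "Suc k"]) (use cols ddk in \<open>auto simp: A'_def\<close>)
      next
        case other
        have sI: "strict_mono_on I (dd k)" and sJ: "strict_mono_on J (dd k)"
          using dd_mono other IJ n by auto
        have "sym_trop_singular A (dd k ` I) (dd k ` J)"
          using a(1) dd_img[of I k] dd_img[of J k] card_dd[of I k] card_dd[of J k] IJ other n by auto
        then show ?thesis unfolding A'_def
          by (rule sing_relabel[OF strict_mono_on_imp_inj_on[OF sI] strict_mono_on_imp_inj_on[OF sJ] fin(1)])
      qed
    qed
    have R: "\<not> (\<exists>M. sym_lift (Suc n) A' M \<and> rank_le_minors (Suc n) r M)"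
    proof
      assume "\<exists>M. sym_lift (Suc n) A' M \<and> rank_le_minors (Suc n) r M"
      then obtain M where M: "sym_lift (Suc n) A' M" "rank_le_minors (Suc n) r M" by blast
      have "sym_lift n A M" using M(1) unfolding sym_lift_def A'_def n by (auto simp: dd_small)
      moreover have "{..<n} \<subseteq> {..<Suc n}" by auto
      then have "rank_le_minors n r M" unfolding rank_le_minors_def
      proof (intro allI impI)
        fix I J assume sub: "{..<n} \<subseteq> {..<Suc n}" and h: "I \<subseteq> {..<n}" "J \<subseteq> {..<n}" "card I = r" "card J = r"
        have "I \<subseteq> {..<Suc n}" "J \<subseteq> {..<Suc n}" using h(1,2) by (auto simp: subset_iff)
        then show "minor_vanishes M I J" using M(2) h(3,4) unfolding rank_le_minors_def by blast
      qed
      ultimately show False using a(2) by blast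
    qed
    show False using L R B' by blast
  next
    case b
    obtain I0 J0 where IJ0: "I0 \<subseteq> {..<n}" "J0 \<subseteq> {..<n}" "card I0 = r" "card J0 = r"
      "\<not> sym_trop_singular A I0 J0" using b(1) by blast
    have "sym_trop_singular A' I0 J0 = sym_trop_singular A I0 J0"
      by (rule sing_cong) (use IJ0 in \<open>auto simp: A'_def dd_small n subset_iff\<close>)
    then have L: "\<not> (\<forall>I J. I \<subseteq> {..<Suc n} \<longrightarrow> J \<subseteq> {..<Suc n} \<longrightarrow> card I = r \<longrightarrow> card J = r \<longrightarrow> sym_trop_singular A' I J)"
      using IJ0 by (metis lessThan_Suc subset_insertI2)
    obtain M where M: "sym_lift n A M" "rank_le_minors n r M" using b(2) by blast
    define M' where "M' = (\<lambda>i j. M (dd k i) (dd k j))"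
    have lift: "sym_lift (Suc n) A' M'"
      using M(1) dd_img[of "{i}" k for i] unfolding sym_lift_def A'_def M'_def n by auto
    have rk: "rank_le_minors (Suc n) r M'"
      unfolding rank_le_minors_def minor_vanishes_def
    proof (intro allI impI)
      fix I J g assume IJ: "I \<subseteq> {..<Suc n}" "J \<subseteq> {..<Suc n}" "card I = r" "card J = r"
      have fin: "finite I" "finite J" using IJ finite_subset by auto
      consider (rows) "k \<in> I \<and> Suc k \<in> I" | (cols) "k \<in> J \<and> Suc k \<in> J"
        | (other) "\<not> (k \<in> I \<and> Suc k \<in> I)" "\<not> (k \<in> J \<and> Suc k \<in> J)" by blast
      then show "minor_coeff M' I J g = 0"
      proof cases
        case rows
        show ?thesis by (rule minor_zero_rows[OF fin(1), where a = k and b = "Suc k"]) (use rows ddk in \<open>auto simp: M'_def\<close>)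
      next
        case cols
        show ?thesis by (rule minor_zero_cols[OF fin(1), where a = k and b = "Suc k"]) (use cols ddk in \<open>auto simp: M'_def\<close>)
      next
        case other
        have sI: "strict_mono_on I (dd k)" and sJ: "strict_mono_on J (dd k)"
          using dd_mono other IJ n by auto
        have "minor_coeff M' I J g = minor_coeff M (dd k ` I) (dd k ` J) g"
          unfolding M'_def by (rule minor_relabel[OF sI sJ])
        also have "\<dots> = 0"
          using M(2) dd_img[of I k] dd_img[of J k] card_dd[of I k] card_dd[of J k] IJ other n
          unfolding rank_le_minors_def minor_vanishes_def by auto
        finally show ?thesis .
      qed
    qed
    show False using L lift rk B' by blast
  qed
qed

end
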